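(* Assume the standing hypotheses (H). Then for every part $A$ of $G$ and every color $c$, at most two vertices $v\in A$ satisfy $c\in L(v)$.
   Context: A list assignment $L$ assigns to each vertex $v$ a set $L(v)$ of colors; an $L$-coloring is a proper coloring $f$ with $f(v)\in L(v)$ for all $v$; $\mathrm{ch}$ denotes choice number and $\chi$ chromatic number. A part of a complete multipartite graph is one of its maximal stable sets. Standing hypotheses (H): $k\ge1$ and $n\ge 2k+2$ are integers; $G$ is a complete $k$-partite graph (exactly $k$ nonempty parts) on $n$ vertices; $L$ is a list assignment for $G$ with $|L(v)|\ge\lceil (n+k-1)/3\rceil$ for every vertex $v$; $G$ has no $L$-coloring; $\left|\bigcup_{v\in V(G)}L(v)\right|\le n-1$; and every graph $H$ with fewer than $n$ vertices satisfies $\mathrm{ch}(H)\le\max\{\chi(H),\lceil(|V(H)|+\chi(H)-1)/3\rceil\}$. *)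

theory Defs
  imports Complex_Main "HOL-Library.Disjoint_Sets"
begin

definition simple_graph :: "'a set \<Rightarrow> ('a \<Rightarrow> 'a \<Rightarrow> bool) \<Rightarrow> bool" where
  "simple_graph V E \<longleftrightarrow> finite V \<and> (\<forall>u v. E u v \<longrightarrow> u \<in> V \<and> v \<in> V)
     \<and> (\<forall>u v. E u v \<longrightarrow> E v u) \<and> (\<forall>v. \<not> E v v)"

definition proper_coloring :: "'a set \<Rightarrow> ('a \<Rightarrow> 'a \<Rightarrow> bool) \<Rightarrow> ('a \<Rightarrow> 'c) \<Rightarrow> bool" where
  "proper_coloring V E f \<longleftrightarrow> (\<forall>u\<in>V. \<forall>v\<in>V. E u v \<longrightarrow> f u \<noteq> f v)"

definition L_coloring :: "'a set \<Rightarrow> ('a \<Rightarrow> 'a \<Rightarrow> bool) \<Rightarrow> ('a \<Rightarrow> 'c set) \<Rightarrow> ('a \<Rightarrow> 'c) \<Rightarrow> bool" where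
  "L_coloring V E L f \<longleftrightarrow> proper_coloring V E f \<and> (\<forall>v\<in>V. f v \<in> L v)"

definition colorable :: "'a set \<Rightarrow> ('a \<Rightarrow> 'a \<Rightarrow> bool) \<Rightarrow> nat \<Rightarrow> bool" where
  "colorable V E k \<longleftrightarrow> (\<exists>f :: 'a \<Rightarrow> nat. proper_coloring V E f \<and> f ` V \<subseteq> {..<k})"

definition chromatic_number :: "'a set \<Rightarrow> ('a \<Rightarrow> 'a \<Rightarrow> bool) \<Rightarrow> nat" where
  "chromatic_number V E = (LEAST k. colorable V E k)"

definition choosable :: "'a set \<Rightarrow> ('a \<Rightarrow> 'a \<Rightarrow> bool) \<Rightarrow> nat \<Rightarrow> bool" where
  "choosable V E k \<longleftrightarrow> (\<forall>L :: 'a \<Rightarrow> nat set.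
      (\<forall>v\<in>V. finite (L v) \<and> card (L v) \<ge> k) \<longrightarrow> (\<exists>f. L_coloring V E L f))"

definition choice_number :: "'a set \<Rightarrow> ('a \<Rightarrow> 'a \<Rightarrow> bool) \<Rightarrow> nat" where
  "choice_number V E = (LEAST k. choosable V E k)"

definition stable_set :: "'a set \<Rightarrow> ('a \<Rightarrow> 'a \<Rightarrow> bool) \<Rightarrow> 'a set \<Rightarrow> bool" where
  "stable_set V E A \<longleftrightarrow> A \<subseteq> V \<and> (\<forall>u\<in>A. \<forall>v\<in>A. \<not> E u v)"

text \<open>A part of a complete multipartite graph: a maximal stable set.\<close>
definition part :: "'a set \<Rightarrow> ('a \<Rightarrow> 'a \<Rightarrow> bool) \<Rightarrow> 'a set \<Rightarrow> bool" where
  "part V E A \<longleftrightarrow> stable_set V E A \<and> (\<forall>B. stable_set V E B \<and> A \<subseteq> B \<longrightarrow> B = A)"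

definition complete_multipartite :: "'a set \<Rightarrow> ('a \<Rightarrow> 'a \<Rightarrow> bool) \<Rightarrow> nat \<Rightarrow> bool" where
  "complete_multipartite V E k \<longleftrightarrow> finite V \<and> (\<exists>P. partition_on V P \<and> card P = k \<and>
     (\<forall>u v. E u v \<longleftrightarrow> u \<in> V \<and> v \<in> V \<and> \<not> (\<exists>X\<in>P. u \<in> X \<and> v \<in> X)))"

end

theory Submission
  imports Defs
begin

lemma greedy_inj:
  assumes "finite V"
  shows "(\<forall>v\<in>V. finite (L v) \<and> card (L v) \<ge> card V) \<Longrightarrow> \<exists>f. inj_on f V \<and> (\<forall>v\<in>V. f v \<in> L v)"
  using assms
proof (induction V rule: finite_induct)
  case empty
  then show ?case by auto
next
  case (insert x F)
  then have "\<forall>v\<in>F. finite (L v) \<and> card (L v) \<ge> card F" by auto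
  with insert.IH obtain f where f: "inj_on f F" "\<forall>v\<in>F. f v \<in> L v" by blast
  have "card (f ` F) \<le> card F" by (rule card_image_le) (use insert in auto)
  moreover have "card (L x) \<ge> card F + 1" using insert by auto
  moreover have "finite (L x)" using insert by auto
  ultimately have "\<not> L x \<subseteq> f ` F"
    by (metis card_mono insert.hyps(1) finite_imageI le_trans not_less_eq_eq Suc_eq_plus1)
  then obtain a where a: "a \<in> L x" "a \<notin> f ` F" by blast
  show ?case
    apply (rule exI[of _ "f(x := a)"])
    using f a insert.hyps by (auto simp: inj_on_def)
qed

lemma choosable_mono: "choosable V E k \<Longrightarrow> k \<le> m \<Longrightarrow> choosable V E m"
  unfolding choosable_def by (meson le_trans)

lemma choosable_card: "simple_graph V E \<Longrightarrow> choosable V E (card V)"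
  unfolding choosable_def
proof (intro allI impI)
  fix L :: "'a \<Rightarrow> nat set"
  assume sg: "simple_graph V E" and L: "\<forall>v\<in>V. finite (L v) \<and> card V \<le> card (L v)"
  from sg have "finite V" by (simp add: simple_graph_def)
  from greedy_inj[OF this L] obtain f where f: "inj_on f V" "\<forall>v\<in>V. f v \<in> L v" by blast
  have "proper_coloring V E f"
    unfolding proper_coloring_def using f(1) sg
    by (metis inj_on_def simple_graph_def)
  then show "\<exists>f. L_coloring V E L f" using f unfolding L_coloring_def by blast
qed

lemma choice_ok: "simple_graph V E \<Longrightarrow> choice_number V E \<le> m \<Longrightarrow> choosable V E m"
  unfolding choice_number_def
  by (meson LeastI choosable_card choosable_mono)

theorem corollary12:
  fixes V :: "'a set" and E :: "'a \<Rightarrow> 'a \<Rightarrow> bool" and L :: "'a \<Rightarrow> 'c set"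
    and k n :: nat
  assumes "k \<ge> 1" and "n \<ge> 2 * k + 2"
    and "complete_multipartite V E k" and "card V = n"
    and "\<forall>v\<in>V. card (L v) \<ge> nat \<lceil>(real n + real k - 1) / 3\<rceil>"
    and "\<not> (\<exists>f. L_coloring V E L f)"
    and "finite (\<Union>v\<in>V. L v)" and "card (\<Union>v\<in>V. L v) \<le> n - 1"
    and "\<forall>(VH :: nat set) EH. simple_graph VH EH \<and> card VH < n \<longrightarrow>
           choice_number VH EH \<le> max (chromatic_number VH EH)
             (nat \<lceil>(real (card VH) + real (chromatic_number VH EH) - 1) / 3\<rceil>)"
  shows "\<forall>A c. part V E A \<longrightarrow> card {v \<in> A. c \<in> L v} \<le> 2"
proof (intro allI impI)
  fix A c assume part: "part V E A"
  show "card {v\<in>A. c\<in>L v} \<le> 2"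
  proof (rule ccontr)
    assume ncard: "\<not> card {v\<in>A. c\<in>L v} \<le> 2"
    define S where "S = {v\<in>A. c\<in>L v}"
    have AV: "A \<subseteq> V" and stab: "\<forall>u\<in>A. \<forall>v\<in>A. \<not> E u v"
      using part by (auto simp: part_def stable_set_def)
    from assms(3) have finV: "finite V" unfolding complete_multipartite_def by blast
    from assms(3) obtain P where P: "partition_on V P" "card P = k"
      "\<forall>u v. E u v \<longleftrightarrow> u \<in> V \<and> v \<in> V \<and> \<not> (\<exists>X\<in>P. u \<in> X \<and> v \<in> X)"
      unfolding complete_multipartite_def by blast
    have PV: "\<Union>P = V" using P(1) by (simp add: partition_on_def)
    have Esym: "E u v \<Longrightarrow> E v u" for u v using P(3) by blast
    have EV: "E u v \<Longrightarrow> u \<in> V \<and> v \<in> V" for u v using P(3) by blast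
    have Eirr: "\<not> E u u" for u using P(3) PV by blast
    have "finite S" using AV finV S_def by (metis (no_types, lifting) finite_subset mem_Collect_eq subsetI)
    moreover have "card S \<ge> 3" using ncard S_def by simp
    ultimately obtain T where T: "T \<subseteq> S" "card T = 3" "finite T"
      using obtain_subset_with_card_n by metis
    have TV: "T \<subseteq> V" using T(1) AV S_def by auto
    define V' where "V' = V - T"
    have cardV': "card V' = n - 3" unfolding V'_def using TV T finV assms(4)
      by (simp add: card_Diff_subset)
    have finV': "finite V'" using finV V'_def by simp
    obtain h :: "'a \<Rightarrow> nat" and m where h: "h ` V' = {i. i<m}" "inj_on h V'"
      using finite_imp_inj_to_nat_seg[OF finV'] by blast
    define U where "U = (\<Union>v\<in>V. L v)"
    have finU: "finite U" using assms(7) U_def by simp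
    obtain cm :: "'c \<Rightarrow> nat" and m2 where cm: "inj_on cm U"
      using finite_imp_inj_to_nat_seg[OF finU] by blast
    define VH where "VH = h ` V'"
    define EH where "EH = (\<lambda>x y. \<exists>u\<in>V'. \<exists>v\<in>V'. x = h u \<and> y = h v \<and> E u v)"
    have sg: "simple_graph VH EH"
      unfolding simple_graph_def
    proof (intro conjI allI impI)
      show "finite VH" using finV' VH_def by simp
      fix u v assume "EH u v"
      then show "u \<in> VH" "v \<in> VH" unfolding EH_def VH_def by auto
      show "EH v u" using \<open>EH u v\<close> Esym unfolding EH_def by blast
    next
      fix v show "\<not> EH v v" unfolding EH_def using h(2) Eirr by (metis inj_on_def)
    qed
    have cardVH: "card VH = n - 3" using VH_def card_image[OF h(2)] cardV' by simp
    have finP: "finite P" using P(2) assms(1) card.infinite by fastforce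
    obtain g :: "'a set \<Rightarrow> nat" and m3 where g: "g ` P = {i. i<m3}" "inj_on g P"
      using finite_imp_inj_to_nat_seg[OF finP] by blast
    have m3: "m3 = k" using g P(2) by (metis card_Collect_less_nat card_image)
    define cls where "cls v = (SOME X. X \<in> P \<and> v \<in> X)" for v
    have cls: "cls v \<in> P \<and> v \<in> cls v" if "v \<in> V" for v
      unfolding cls_def by (rule someI_ex) (use that PV in blast)
    have colH: "colorable VH EH k"
      unfolding colorable_def
    proof (intro exI conjI)
      let ?f = "\<lambda>x. g (cls (inv_into V' h x))"
      show "proper_coloring VH EH ?f"
        unfolding proper_coloring_def
      proof (intro ballI impI)
        fix x y assume "x \<in> VH" "y \<in> VH" "EH x y"
        then obtain u v where uv: "u \<in> V'" "v \<in> V'" "x = h u" "y = h v" "E u v"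
          unfolding EH_def by blast
        have iu: "inv_into V' h x = u" "inv_into V' h y = v" using uv h(2) by auto
        have "u \<in> V" "v \<in> V" using uv V'_def by auto
        show "?f x \<noteq> ?f y"
        proof
          assume "?f x = ?f y"
          then have "cls u = cls v" using iu g(2) cls \<open>u \<in> V\<close> \<open>v \<in> V\<close> by (metis inj_onD)
          then show False using cls \<open>u \<in> V\<close> \<open>v \<in> V\<close> uv(5) P(3) by metis
        qed
      qed
      show "?f ` VH \<subseteq> {..<k}"
      proof
        fix y assume "y \<in> ?f ` VH"
        then obtain x where x: "x \<in> VH" "y = ?f x" by blast
        then have "inv_into V' h x \<in> V'" unfolding VH_def by (simp add: inv_into_into)
        then have "cls (inv_into V' h x) \<in> P" using cls V'_def by auto
        then show "y \<in> {..<k}" using x g(1) m3 by auto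
      qed
    qed
    have chi: "chromatic_number VH EH \<le> k"
      unfolding chromatic_number_def using colH by (rule Least_le)
    define s where "s = nat \<lceil>(real n + real k - 1) / 3\<rceil>"
    define ch where "ch = chromatic_number VH EH"
    have n4: "n \<ge> 4" using assms(1,2) by simp
    have b1: "ch \<le> s - 1"
    proof -
      have "2 * real k + 2 \<le> real n" using assms(2) by (metis of_nat_le_iff of_nat_add of_nat_mult of_nat_numeral)
      then have "real k < (real n + real k - 1) / 3" by simp
      then have "int k < \<lceil>(real n + real k - 1) / 3\<rceil>" by (simp add: less_ceiling_iff)
      then have "real k + 1 \<le> real s" unfolding s_def by linarith
      then show ?thesis using chi ch_def by linarith
    qed
    have b2: "nat \<lceil>(real (card VH) + real ch - 1) / 3\<rceil> \<le> s - 1"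
    proof -
      have "(real (card VH) + real ch - 1) / 3 \<le> (real n + real k - 1) / 3 - 1"
      proof -
        have "real (card VH) = real n - 3" using cardVH n4 by (simp add: of_nat_diff)
        moreover have "real ch \<le> real k" using chi ch_def by simp
        ultimately show ?thesis by (simp add: field_simps)
      qed
      then have "\<lceil>(real (card VH) + real ch - 1) / 3\<rceil> \<le> \<lceil>(real n + real k - 1) / 3\<rceil> - 1"
        by (metis ceiling_diff_one ceiling_mono)
      then show ?thesis unfolding s_def by linarith
    qed
    have "card VH < n" using cardVH n4 by simp
    then have "choice_number VH EH \<le> max ch (nat \<lceil>(real (card VH) + real ch - 1) / 3\<rceil>)"
      using assms(9)[rule_format, of VH EH] sg unfolding ch_def by blast
    then have "choice_number VH EH \<le> s - 1" using b1 b2 by linarith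
    then have chs: "choosable VH EH (s - 1)" using choice_ok sg by blast
    define LH where "LH x = cm ` (L (inv_into V' h x) - {c})" for x
    have LH: "\<forall>x\<in>VH. finite (LH x) \<and> card (LH x) \<ge> s - 1"
    proof
      fix x assume "x \<in> VH"
      then have v: "inv_into V' h x \<in> V'" unfolding VH_def by (simp add: inv_into_into)
      let ?v = "inv_into V' h x"
      have vV: "?v \<in> V" using v V'_def by auto
      have sub: "L ?v \<subseteq> U" using vV U_def by auto
      have finL: "finite (L ?v)" using sub finU finite_subset by blast
      have "L ?v - {c} \<subseteq> U" using sub by blast
      then have inj: "inj_on cm (L ?v - {c})" using inj_on_subset[OF cm] by blast
      have "card (LH x) = card (L ?v - {c})" unfolding LH_def using card_image[OF inj] .
      moreover have "card (L ?v - {c}) \<ge> card (L ?v) - 1" by (simp add: card_Diff_singleton_if)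
      moreover have "card (L ?v) \<ge> s" using assms(5) vV s_def by blast
      ultimately show "finite (LH x) \<and> card (LH x) \<ge> s - 1" using finL LH_def by simp
    qed
    obtain f where f: "L_coloring VH EH LH f" using chs LH unfolding choosable_def by blast
    define F where "F v = (if v \<in> T then c else inv_into U cm (f (h v)))" for v
    have Fin: "F v \<in> L v - {c} \<and> f (h v) \<in> cm ` U" if "v \<in> V'" for v
    proof -
      have "h v \<in> VH" using that VH_def by simp
      then have "f (h v) \<in> LH (h v)" using f unfolding L_coloring_def by blast
      moreover have "inv_into V' h (h v) = v" using h(2) that by simp
      ultimately have fm: "f (h v) \<in> cm ` (L v - {c})" unfolding LH_def by simp
      have "L v \<subseteq> U" using that V'_def U_def by auto
      then show ?thesis using fm cm that V'_def F_def by (auto simp: inv_into_f_f)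
    qed
    have "L_coloring V E L F"
      unfolding L_coloring_def proper_coloring_def
    proof (intro conjI ballI impI)
      fix v assume "v \<in> V"
      then show "F v \<in> L v" using Fin[of v] V'_def F_def T S_def by (cases "v \<in> T") auto
    next
      fix u v assume uv: "u \<in> V" "v \<in> V" "E u v"
      show "F u \<noteq> F v"
      proof (cases "u \<in> T")
        case True
        then have "v \<notin> T" using uv stab T S_def by blast
        then show ?thesis using True Fin[of v] uv V'_def F_def by auto
      next
        case False
        note uF = False
        show ?thesis
        proof (cases "v \<in> T")
          case True
          then show ?thesis using uF Fin[of u] uv V'_def F_def by auto
        next
          case False
          have u': "u \<in> V'" "v \<in> V'" using uF False uv V'_def by auto
          have "EH (h u) (h v)" using u' uv EH_def by blast
          moreover have "h u \<in> VH" "h v \<in> VH" using u' VH_def by auto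
          ultimately have "f (h u) \<noteq> f (h v)" using f unfolding L_coloring_def proper_coloring_def by blast
          moreover have "f (h u) \<in> cm ` U" "f (h v) \<in> cm ` U" using Fin u' by auto
          ultimately show ?thesis using uF False F_def
            by (metis inv_into_injective)
        qed
      qed
    qed
    with assms(6) show False by blast
  qed
qed

end
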